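(* Let $\gamma = \lim_{n\to\infty}\left(1 + \frac{1}{2} + \cdots + \frac{1}{n} - \ln n\right)$ be Euler's constant. Then $$e^{\gamma} = \prod_{n=1}^{\infty} \left( \prod_{k=0}^{n} (k+1)^{(-1)^{k+1}\binom{n}{k}} \right)^{1/(n+1)} = \left(\frac{2}{1}\right)^{1/2}\left(\frac{2^2}{1\cdot 3}\right)^{1/3}\left(\frac{2^3\cdot 4}{1\cdot 3^3}\right)^{1/4}\left(\frac{2^4\cdot 4^4}{1\cdot 3^6\cdot 5}\right)^{1/5}\cdots,$$ where the infinite product converges, i.e. its $N$th partial product tends to $e^\gamma$ as $N\to\infty$. Equivalently, $$\gamma = \sum_{n=1}^{\infty} \frac{1}{n+1} \sum_{k=0}^{n} (-1)^{k+1}\binom{n}{k} \ln(k+1).$$ *)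

theory Defs
  imports "HOL-Analysis.Analysis"
begin

end

theory Submission
  imports Defs
begin

definition Fi :: "real \<Rightarrow> real \<Rightarrow> real" where
  "Fi s x = (if x = 1 then s else (1 - x powr s) / (- ln x))"

lemma Fi_bounds:
  assumes "0 \<le> x" "x \<le> 1" "0 \<le> s"
  shows "0 \<le> Fi s x \<and> Fi s x \<le> s"
proof (cases "x = 0 \<or> x = 1")
  case True
  then show ?thesis using assms by (auto simp: Fi_def)
next
  case False
  then have x: "0 < x" "x < 1" using assms by auto
  have l: "ln x < 0" using x by simp
  have e: "x powr s = exp (s * ln x)" using x by (simp add: powr_def)
  have "s * ln x \<le> 0" using l assms(3) by (simp add: mult_nonneg_nonpos)
  then have p1: "x powr s \<le> 1" using e by simp
  have p2: "1 - x powr s \<le> - (s * ln x)" using e exp_ge_add_one_self[of "s * ln x"] by linarith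
  have "(1 - x powr s) / (- ln x) \<le> s"
  proof -
    have "1 - x powr s \<le> s * (- ln x)" using p2 by simp
    moreover have "0 < - ln x" using l by simp
    ultimately show ?thesis by (simp only: pos_divide_le_eq)
  qed
  moreover have "0 \<le> (1 - x powr s) / (- ln x)" by (rule divide_nonneg_pos) (use p1 l in auto)
  ultimately show ?thesis using x by (simp add: Fi_def)
qed

lemma Fi_integrable:
  assumes "0 \<le> s"
  shows "Fi s integrable_on {0..1}"
proof -
  have c: "continuous_on {0<..<1::real} (Fi s)"
  proof -
    have "continuous_on {0<..<1::real} (\<lambda>x. (1 - x powr s) / (- ln x))"
      by (intro continuous_intros) auto
    then show ?thesis
      by (rule continuous_on_eq) (auto simp: Fi_def)
  qed
  have "Fi s integrable_on {0<..<1}"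
  proof (rule measurable_bounded_by_integrable_imp_integrable_real[where g="\<lambda>_. s"])
    show "Fi s \<in> borel_measurable (lebesgue_on {0<..<1})"
      by (rule continuous_imp_measurable_on_sets_lebesgue[OF c]) auto
    show "(\<lambda>_. s) integrable_on {0<..<1::real}"
      by (rule integrable_on_Icc_iff_Ioo[THEN iffD1, OF integrable_const_ivl])
    show "\<bar>Fi s x\<bar> \<le> s" if "x \<in> {0<..<1}" for x
      using Fi_bounds[of x s] that assms by auto
  qed auto
  then show ?thesis by (simp add: integrable_on_Icc_iff_Ioo)
qed

lemma Fi_deriv:
  assumes "0 < s" "x \<in> {0..1::real}"
  shows "((\<lambda>s. Fi s x) has_field_derivative x powr s) (at s within {0<..})"
proof -
  consider "x = 0" | "x = 1" | "0 < x" "x < 1" using assms by fastforce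
  then show ?thesis
  proof cases
    case 1
    then show ?thesis by (simp add: Fi_def)
  next
    case 2
    then show ?thesis by (auto simp: Fi_def intro!: derivative_eq_intros)
  next
    case 3
    then have l: "ln x \<noteq> 0" by simp
    have "((\<lambda>s. (1 - exp (s * ln x)) / (- ln x)) has_field_derivative exp (s * ln x)) (at s within {0<..})"
      using 3 l by (auto intro!: derivative_eq_intros simp: field_simps)
    moreover have "(\<lambda>s. Fi s x) = (\<lambda>s. (1 - exp (s * ln x)) / (- ln x))"
      using 3 by (auto simp: Fi_def powr_def)
    ultimately show ?thesis using 3 by (simp add: powr_def)
  qed
qed

lemma Fi_integral:
  assumes "0 < s"
  shows "integral {0..1} (Fi s) = ln (1 + s)"
proof -
  define G where "G = (\<lambda>s. integral {0..1} (Fi s) - ln (1 + s))"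
  have D: "(G has_field_derivative 0) (at t within {0<..})" if t: "t \<in> {0<..}" for t
  proof -
    have "((\<lambda>s. integral (cbox 0 1) (Fi s)) has_field_derivative integral (cbox 0 1) (\<lambda>x. x powr t))
          (at t within {0<..})"
    proof (rule leibniz_rule_field_derivative)
      show "((\<lambda>s. Fi s x) has_field_derivative x powr s) (at s within {0<..})"
        if "s \<in> {0<..}" "x \<in> cbox 0 1" for s x
        using Fi_deriv[of s x] that by auto
      show "Fi s integrable_on cbox 0 1" if "s \<in> {0<..}" for s
        using Fi_integrable[of s] that by (simp add: cbox_interval less_imp_le)
      show "continuous_on ({0<..} \<times> cbox 0 1) (\<lambda>(s, x::real). x powr s)"
      proof -
        have "continuous_on ({0<..} \<times> cbox 0 1) (\<lambda>p::real\<times>real. (snd p) powr (fst p))"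
          by (rule continuous_on_powr') (auto intro: continuous_intros simp: cbox_interval)
        then show ?thesis by (simp add: case_prod_unfold)
      qed
    qed (use t in auto)
    moreover have "integral (cbox 0 1) (\<lambda>x. x powr t) = 1 / (t + 1)"
      using has_integral_powr_from_0[of t 1] t by (auto intro!: integral_unique)
    ultimately have "((\<lambda>s. integral {0..1} (Fi s)) has_field_derivative 1 / (t + 1)) (at t within {0<..})"
      by simp
    then show ?thesis unfolding G_def using t
      by (auto intro!: derivative_eq_intros simp: field_simps)
  qed
  obtain c where c: "\<And>t. t \<in> {0<..} \<Longrightarrow> G t = c"
    using has_field_derivative_zero_constant[of "{0<..}" G] D by auto
  have bnd: "\<bar>c\<bar> \<le> 2 * t" if "t > 0" for t
  proof -
    have i1: "integral {0..1} (Fi t) \<le> t"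
    proof -
      have "integral {0..1} (Fi t) \<le> integral {0..1} (\<lambda>_::real. t)"
        by (rule integral_le) (use Fi_integrable[of t] that Fi_bounds[of _ t] in \<open>auto intro: integrable_const_ivl\<close>)
      then show ?thesis by simp
    qed
    have i0: "0 \<le> integral {0..1} (Fi t)"
      by (rule integral_nonneg) (use Fi_integrable[of t] that Fi_bounds[of _ t] in auto)
    have "ln (1 + t) \<le> t" using that by (intro ln_add_one_self_le_self) auto
    moreover have "0 \<le> ln (1 + t)" using that by simp
    ultimately have "\<bar>integral {0..1} (Fi t) - ln (1 + t)\<bar> \<le> 2 * t"
      using i1 i0 by (simp only: abs_le_iff) linarith
    then show ?thesis using c[of t] that unfolding G_def by simp
  qed
  have "c = 0"
  proof (rule ccontr)
    assume "c \<noteq> 0"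
    then have "\<bar>c\<bar> \<le> 2 * (\<bar>c\<bar> / 3)" using bnd[of "\<bar>c\<bar>/3"] by auto
    then show False using \<open>c \<noteq> 0\<close> by auto
  qed
  then show ?thesis using c[of s] assms unfolding G_def by auto
qed

lemma L_integral:
  "((\<lambda>x. (1 - x ^ k) / (- ln x)) has_integral ln (real k + 1)) {0<..<1::real}"
proof (cases "k = 0")
  case True
  then show ?thesis by simp
next
  case False
  then have "Fi (real k) integrable_on {0..1}" by (intro Fi_integrable) auto
  then have "(Fi (real k) has_integral ln (1 + real k)) {0..1}"
    using Fi_integral[of "real k"] False by (metis has_integral_integral of_nat_0_less_iff neq0_conv)
  then have "(Fi (real k) has_integral ln (real k + 1)) {0<..<1}"
    by (simp add: has_integral_Icc_iff_Ioo add.commute)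
  then show ?thesis
    by (rule has_integral_eq[rotated]) (auto simp: Fi_def powr_realpow add.commute)
qed

definition hh :: "real \<Rightarrow> real" where
  "hh x = 1 / (1 - x) - 1 / (- ln x)"

lemma hh_nonneg:
  assumes "0 < x" "x < 1"
  shows "0 \<le> hh x"
proof -
  have "ln x \<le> x - 1" using assms by (intro ln_le_minus_one) auto
  then have "1 - x \<le> - ln x" by simp
  moreover have "0 < 1 - x" using assms by simp
  moreover have l: "ln x < 0" using assms by simp
  ultimately have "1 / (- ln x) \<le> 1 / (1 - x)"
    by (intro divide_left_mono) (auto simp: mult_neg_pos)
  then show ?thesis by (simp add: hh_def)
qed

lemma pow_integral:
  "((\<lambda>x. x ^ j) has_integral 1 / (real j + 1)) {0<..<1::real}"
proof -
  have "((\<lambda>x. x powr real j) has_integral 1 powr (real j + 1) / (real j + 1)) {0..1}"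
    by (rule has_integral_powr_from_0) auto
  then have "((\<lambda>x. x powr real j) has_integral 1 / (real j + 1)) {0<..<1}"
    by (simp add: has_integral_Icc_iff_Ioo)
  then show ?thesis
    by (rule has_integral_eq[rotated]) (auto simp: powr_realpow)
qed

lemma geom_integral:
  "((\<lambda>x. (1 - x ^ N) / (1 - x)) has_integral harm N) {0<..<1::real}"
proof -
  have "((\<lambda>x. \<Sum>j<N. x ^ j) has_integral (\<Sum>j<N. 1 / (real j + 1))) {0<..<1::real}"
    by (intro has_integral_sum pow_integral) auto
  moreover have "(\<Sum>j<N. 1 / (real j + 1)) = harm N"
    by (simp add: harm_altdef field_simps)
  ultimately have "((\<lambda>x. \<Sum>j<N. x ^ j) has_integral harm N) {0<..<1::real}" by simp
  then show ?thesis
    by (rule has_integral_eq[rotated]) (auto simp: sum_gp_strict)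
qed

lemma hh_integral: "(hh has_integral euler_mascheroni) {0<..<1}"
proof (rule has_integral_monotone_convergence_increasing)
  let ?f = "\<lambda>N (x::real). (1 - x ^ N) / (1 - x) - (1 - x ^ N) / (- ln x)"
  show "(?f N has_integral (harm N - ln (real N + 1))) {0<..<1}" for N
    by (intro has_integral_diff geom_integral L_integral)
  show "?f k x \<le> ?f (Suc k) x" if "x \<in> {0<..<1}" for k x
  proof -
    have e: "?f N x = (1 - x ^ N) * hh x" for N
      using that by (simp add: hh_def field_simps)
    have "x ^ Suc k \<le> x ^ k" using that by (simp add: power_decreasing)
    then have "1 - x ^ k \<le> 1 - x ^ Suc k" by simp
    then show ?thesis unfolding e using hh_nonneg[of x] that by (intro mult_right_mono) auto
  qed
  show "(\<lambda>k. ?f k x) \<longlonglongrightarrow> hh x" if "x \<in> {0<..<1}" for x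
  proof -
    have e: "?f N x = (1 - x ^ N) * hh x" for N
      using that by (simp add: hh_def field_simps)
    have "(\<lambda>N. x ^ N) \<longlonglongrightarrow> 0" by (rule LIMSEQ_power_zero) (use that in auto)
    then have "(\<lambda>N. (1 - x ^ N) * hh x) \<longlonglongrightarrow> (1 - 0) * hh x"
      by (intro tendsto_mult tendsto_diff tendsto_const)
    then show ?thesis unfolding e by simp
  qed
  show "(\<lambda>N. harm N - ln (real N + 1)) \<longlonglongrightarrow> euler_mascheroni"
  proof -
    have a: "(\<lambda>N. harm (Suc N) - ln (real (Suc N))) \<longlonglongrightarrow> (euler_mascheroni :: real)"
      using LIMSEQ_Suc[OF euler_mascheroni_LIMSEQ] by simp
    have b: "(\<lambda>N. inverse (real (Suc N))) \<longlonglongrightarrow> 0"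
      using LIMSEQ_inverse_real_of_nat by simp
    have "(\<lambda>N. (harm (Suc N) - ln (real (Suc N))) - inverse (real (Suc N))) \<longlonglongrightarrow> euler_mascheroni - 0"
      by (intro tendsto_diff a b)
    then show ?thesis by (simp add: harm_Suc add.commute)
  qed
qed

lemma term_integral:
  assumes "n \<ge> 1"
  shows "((\<lambda>x. (1 - x) ^ n / (- ln x)) has_integral
           (\<Sum>k=0..n. (-1) ^ (k+1) * real (n choose k) * ln (real (k+1)))) {0<..<1}"
proof -
  have "((\<lambda>x. \<Sum>k=0..n. ((-1) ^ (k+1) * real (n choose k)) * ((1 - x ^ k) / (- ln x))) has_integral
           (\<Sum>k=0..n. ((-1) ^ (k+1) * real (n choose k)) * ln (real k + 1))) {0<..<1}"
    by (intro has_integral_sum has_integral_mult_right L_integral) auto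
  moreover have "(\<Sum>k=0..n. ((-1) ^ (k+1) * real (n choose k)) * ((1 - x ^ k) / (- ln x)))
                 = (1 - x) ^ n / (- ln x)" for x :: real
  proof -
    have "(\<Sum>k=0..n. ((-1) ^ (k+1) * real (n choose k)) * ((1 - x ^ k) / (- ln x)))
        = (\<Sum>k=0..n. ((-1) ^ (k+1) * real (n choose k)) * (1 - x ^ k)) / (- ln x)"
      by (simp only: times_divide_eq_right sum_divide_distrib)
    also have "(\<Sum>k=0..n. ((-1) ^ (k+1) * real (n choose k)) * (1 - x ^ k))
        = (\<Sum>k=0..n. real (n choose k) * (- x) ^ k * 1 ^ (n - k)) - (\<Sum>k=0..n. (-1) ^ k * real (n choose k))"
      by (simp add: sum_subtractf[symmetric] algebra_simps power_minus[of x])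
    also have "(\<Sum>k=0..n. (-1) ^ k * real (n choose k)) = 0"
      using choose_alternating_sum[of n] assms by (simp add: atLeast0AtMost)
    also have "(\<Sum>k=0..n. real (n choose k) * (- x) ^ k * 1 ^ (n - k)) = (1 - x) ^ n"
      using binomial_ring[of "-x" 1 n] by (simp add: atLeast0AtMost)
    finally show ?thesis by simp
  qed
  ultimately show ?thesis by (simp add: add.commute)
qed

lemma series_pointwise:
  assumes "0 < x" "x < 1"
  shows "(\<lambda>n. 1 / real (n+2) * ((1 - x) ^ (n+1) / (- ln x))) sums hh x"
proof -
  define u where "u = 1 - x"
  have u: "0 < u" "u < 1" using assms by (auto simp: u_def)
  have l: "ln x < 0" using assms by simp
  have "(\<lambda>n. - ((-(x - 1)) ^ n) / of_nat n) sums ln (1 + (x - 1))"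
    by (rule ln_series') (use assms in auto)
  then have "(\<lambda>n. - (u ^ n / real n)) sums ln x" by (simp add: u_def)
  then have s0: "(\<lambda>n. u ^ n / real n) sums (- ln x)"
    using sums_minus by fastforce
  have "(\<lambda>i. u ^ (i + 2) / real (i + 2)) sums (- ln x - u)"
  proof (subst sums_iff_shift)
    have "(\<Sum>i<2. u ^ i / real i) = u" by (simp add: numeral_2_eq_2)
    then show "(\<lambda>n. u ^ n / real n) sums (- ln x - u + (\<Sum>i<2. u ^ i / real i))"
      using s0 by simp
  qed
  then have "(\<lambda>i. u ^ (i + 2) / real (i + 2) * (1 / (u * (- ln x)))) sums ((- ln x - u) * (1 / (u * (- ln x))))"
    by (rule sums_mult2)
  moreover have "u ^ (i + 2) / real (i + 2) * (1 / (u * (- ln x))) = 1 / real (i+2) * ((1 - x) ^ (i+1) / (- ln x))" for i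
  proof -
    have "u ^ (i + 2) = u * u ^ (i + 1)" by (simp add: numeral_2_eq_2)
    then have "u ^ (i + 2) / real (i + 2) * (1 / (u * (- ln x))) = 1 / real (i+2) * (u ^ (i+1) / (- ln x))"
      using u l by (simp add: field_simps)
    then show ?thesis by (simp add: u_def)
  qed
  moreover have "(- ln x - u) * (1 / (u * (- ln x))) = hh x"
    using u l by (simp add: hh_def u_def field_simps)
  ultimately show ?thesis by simp
qed

lemma series_main:
  "(\<lambda>n. 1 / real (n+2) * (\<Sum>k=0..n+1. (-1) ^ (k+1) * real ((n+1) choose k) * ln (real (k+1))))
           sums euler_mascheroni"
proof -
  define a where "a = (\<lambda>n. 1 / real (n+2) * (\<Sum>k=0..n+1. (-1) ^ (k+1) * real ((n+1) choose k) * ln (real (k+1))))"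
  define t where "t = (\<lambda>n (x::real). 1 / real (n+2) * ((1 - x) ^ (n+1) / (- ln x)))"
  define P where "P = (\<lambda>N x. \<Sum>n<N. t n x)"
  have ti: "(t n has_integral a n) {0<..<1}" for n
    unfolding t_def a_def by (intro has_integral_mult_right term_integral) auto
  have Pi: "(P N has_integral (\<Sum>n<N. a n)) {0<..<1}" for N
    unfolding P_def by (intro has_integral_sum ti) auto
  have t_nonneg: "0 \<le> t n x" if "x \<in> {0<..<1}" for n x
  proof -
    have "0 < - ln x" using that by simp
    then show ?thesis using that unfolding t_def by (intro mult_nonneg_nonneg divide_nonneg_pos) auto
  qed
  have tsums: "(\<lambda>n. t n x) sums hh x" if "x \<in> {0<..<1}" for x
    using series_pointwise[of x] that unfolding t_def by auto
  have P_le: "P N x \<le> hh x" if "x \<in> {0<..<1}" for N x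
  proof -
    have "P N x \<le> suminf (\<lambda>n. t n x)"
      unfolding P_def using tsums[OF that] t_nonneg[OF that]
      by (intro sum_le_suminf) (auto simp: sums_iff)
    then show ?thesis using tsums[OF that] by (simp add: sums_iff)
  qed
  have P_nonneg: "0 \<le> P N x" if "x \<in> {0<..<1}" for N x
    unfolding P_def using t_nonneg[OF that] by (intro sum_nonneg) auto
  have mc: "hh integrable_on {0<..<1} \<and> (\<lambda>k. integral {0<..<1} (P k)) \<longlonglongrightarrow> integral {0<..<1} hh"
  proof (rule monotone_convergence_increasing)
    show "P k integrable_on {0<..<1}" for k using Pi by blast
    show "P k x \<le> P (Suc k) x" if "x \<in> {0<..<1}" for k x
      unfolding P_def using t_nonneg[OF that, of k] by simp
    show "(\<lambda>k. P k x) \<longlonglongrightarrow> hh x" if "x \<in> {0<..<1}" for x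
      using tsums[OF that] unfolding P_def sums_def .
    show "bounded (range (\<lambda>k. integral {0<..<1} (P k)))"
    proof (rule boundedI)
      fix y assume "y \<in> range (\<lambda>k. integral {0<..<1} (P k))"
      then obtain k where k: "y = integral {0<..<1} (P k)" by auto
      have "0 \<le> integral {0<..<1} (P k)"
        by (rule integral_nonneg) (use Pi P_nonneg in auto)
      moreover have "integral {0<..<1} (P k) \<le> integral {0<..<1} hh"
        by (rule integral_le) (use Pi P_le hh_integral in auto)
      ultimately show "norm y \<le> integral {0<..<1} hh" using k by simp
    qed
  qed
  have "(\<lambda>N. \<Sum>n<N. a n) \<longlonglongrightarrow> euler_mascheroni"
    using mc integral_unique[OF hh_integral] integral_unique[OF Pi] by simp
  then show ?thesis unfolding sums_def a_def .
qed

lemma factor_eq: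
  "(\<Prod>k=0..n. real (k+1) powr ((-1) ^ (k+1) * real (n choose k))) powr (1 / real (n+1))
   = exp (1 / real (n+1) * (\<Sum>k=0..n. (-1) ^ (k+1) * real (n choose k) * ln (real (k+1))))"
proof -
  have "(\<Prod>k=0..n. real (k+1) powr ((-1) ^ (k+1) * real (n choose k)))
        = (\<Prod>k=0..n. exp ((-1) ^ (k+1) * real (n choose k) * ln (real (k+1))))"
    by (intro prod.cong refl) (simp add: powr_def del: of_nat_Suc)
  also have "\<dots> = exp (\<Sum>k=0..n. (-1) ^ (k+1) * real (n choose k) * ln (real (k+1)))"
    by (simp add: exp_sum)
  finally show ?thesis by (simp add: powr_def)
qed

theorem mainTheorem1:
  shows "(\<lambda>N. \<Prod>n=1..N. (\<Prod>k=0..n. real (k+1) powr ((-1) ^ (k+1) * real (n choose k))) powr (1 / real (n+1)))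
           \<longlonglongrightarrow> exp euler_mascheroni
       \<and> (\<lambda>n. 1 / real (n+2) * (\<Sum>k=0..n+1. (-1) ^ (k+1) * real ((n+1) choose k) * ln (real (k+1))))
           sums euler_mascheroni"
proof
  define b where "b = (\<lambda>n. 1 / real (n+1) * (\<Sum>k=0..n. (-1) ^ (k+1) * real (n choose k) * ln (real (k+1))))"
  have eq: "(\<Prod>n=1..N. (\<Prod>k=0..n. real (k+1) powr ((-1) ^ (k+1) * real (n choose k))) powr (1 / real (n+1)))
        = exp (\<Sum>n<N. b (Suc n))" for N
  proof -
    have "(\<Prod>n=1..N. (\<Prod>k=0..n. real (k+1) powr ((-1) ^ (k+1) * real (n choose k))) powr (1 / real (n+1)))
          = (\<Prod>n=1..N. exp (b n))"
      unfolding b_def by (intro prod.cong refl factor_eq)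
    also have "\<dots> = exp (\<Sum>n=1..N. b n)" by (simp add: exp_sum)
    also have "(\<Sum>n=1..N. b n) = (\<Sum>n<N. b (Suc n))"
      by (induction N) auto
    finally show ?thesis .
  qed
  have "(\<lambda>n. b (Suc n)) sums euler_mascheroni"
    using series_main unfolding b_def by (simp add: add.commute)
  then have "(\<lambda>N. exp (\<Sum>n<N. b (Suc n))) \<longlonglongrightarrow> exp euler_mascheroni"
    unfolding sums_def by (intro tendsto_exp)
  then show "(\<lambda>N. \<Prod>n=1..N. (\<Prod>k=0..n. real (k+1) powr ((-1) ^ (k+1) * real (n choose k))) powr (1 / real (n+1)))
           \<longlonglongrightarrow> exp euler_mascheroni" unfolding eq .
  show "(\<lambda>n. 1 / real (n+2) * (\<Sum>k=0..n+1. (-1) ^ (k+1) * real ((n+1) choose k) * ln (real (k+1))))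
           sums euler_mascheroni" by (rule series_main)
qed

end
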